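(* For every integer $k\ge2$, the price of anarchy of the weighted atomic two-stage facility location game with $k$ facility agents, measured by the weighted participation rate (which equals the utilitarian social welfare of the facility agents, i.e. the sum of their loads), is exactly $2$. That is, for every instance $(H,U,k)$ with $k$ facility agents, every subgame perfect equilibrium $(\mathbf{s},\sigma)$ and every facility placement profile $\mathbf{s}^*$ we have $w(\mathbf{s}^* )\le 2\,w(\mathbf{s})$, and there exist instances with $k$ facility agents having a subgame perfect equilibrium $(\mathbf{s},\sigma)$ and a facility placement profile $\mathbf{s}^*$ with $w(\mathbf{s}^* )=2\,w(\mathbf{s})>0$.
   Context: Atomic two-stage facility location game. An instance is a triple $(H,U,k)$: $H=(V,E,w)$ is a finite directed graph with vertex weights $w:V\to\mathbb{Q}_{>0}$; $F$ is a set of $k$ facility agents; $U:F\to 2^V$ assigns to each facility agent $f$ a set $U(f)\subseteq V$ of feasible locations. The vertices are simultaneously the clients and the possible locations; $w(X)=\sum_{v\in X}w(v)$. A facility placement profile (FPP) is a vector $\mathbf{s}=(s_f)_{f\in F}$ with $s_f\in U(f)$ (several facilities may choose the same vertex); $S$ denotes the set of all FPPs. For a client $v$ let $N(v)=\{v\}\cup\{u:(v,u)\in E\}$ and $N_{\mathbf{s}}(v)=\{f\in F: s_f\in N(v)\}$. A client profile for $\mathbf{s}$ is $\sigma(\mathbf{s})$, assigning to each client $v$ numbers $\sigma(\mathbf{s})_{v,f}\in[0,1]$ ($f\in F$) with $\sigma(\mathbf{s})_{v,f}=0$ for $f\notin N_{\mathbf{s}}(v)$ and $\sum_{f\in N_{\mathbf{s}}(v)}\sigma(\mathbf{s})_{v,f}=1$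 whenever $N_{\mathbf{s}}(v)\neq\varnothing$. A full client profile $\sigma$ specifies a client profile $\sigma(\mathbf{s}')$ for every $\mathbf{s}'\in S$. The load of facility $f$ is $\ell_f(\mathbf{s},\sigma)=\sum_{v\in V}\sigma(\mathbf{s})_{v,f}w(v)$. The cost of client $v$ is $L_v(\mathbf{s},\sigma)=w(v)+\sum_{f\in N_{\mathbf{s}}(v)}\sigma(\mathbf{s})_{v,f}\,\ell_{-v,f}(\mathbf{s},\sigma)$ where $\ell_{-v,f}(\mathbf{s},\sigma)=\sum_{u\neq v}\sigma(\mathbf{s})_{u,f}w(u)$. $\sigma(\mathbf{s})$ is a client equilibrium if no client $v$ can strictly decrease $L_v$ by unilaterally changing her own distribution to another feasible one; $\sigma$ is a full client equilibrium if $\sigma(\mathbf{s}')$ is a client equilibrium for every $\mathbf{s}'\in S$. A pair $(\mathbf{s},\sigma)$ is a subgame perfect equilibrium (SPE) if $\sigma$ is a full client equilibrium and there is no facility $f$ and location $s'_f\in U(f)$ with $\ell_f((s'_f,\mathbf{s}_{-f}),\sigma)>\ell_f(\mathbf{s},\sigma)$. The weighted participation rate of an FPP $\mathbf{s}$ is $w(\mathbf{s})=\sum_{v:\,N_{\mathbf{s}}(v)\neq\varnothing}w(v)$. The price of anarchy is the maximum, over instances admitting an SPE with positive participation rate, of $\max_{\mathbf{s}^*\in S}w(\mathbf{s}^* )$ divided by the minimum of $w(\mathbf{s})$ over SPE $(\mathbf{s},\sigma)$ of that instance. *)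

theory Defs
  imports Complex_Main "HOL-Library.FuncSet"
begin

text \<open>A client profile for an FPP is p :: 'v \<Rightarrow> 'f \<Rightarrow> real (p v f = sigma(s)_{v,f});
 a full client profile is sigma :: ('f \<Rightarrow> 'v) \<Rightarrow> 'v \<Rightarrow> 'f \<Rightarrow> real.\<close>

definition valid_instance ::
  "'v set \<Rightarrow> ('v \<times> 'v) set \<Rightarrow> ('v \<Rightarrow> real) \<Rightarrow> 'f set \<Rightarrow> ('f \<Rightarrow> 'v set) \<Rightarrow> nat \<Rightarrow> bool" where
  "valid_instance V E w F U k \<longleftrightarrow>
     finite V \<and> E \<subseteq> V \<times> V \<and> (\<forall>v\<in>V. w v \<in> \<rat> \<and> w v > 0) \<and>
     finite F \<and> card F = k \<and> (\<forall>f\<in>F. U f \<subseteq> V)"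

definition nbh :: "('v \<times> 'v) set \<Rightarrow> 'v \<Rightarrow> 'v set" where
  "nbh E v = insert v {u. (v, u) \<in> E}"

definition fpps :: "'f set \<Rightarrow> ('f \<Rightarrow> 'v set) \<Rightarrow> ('f \<Rightarrow> 'v) set" where
  "fpps F U = (\<Pi>\<^sub>E f\<in>F. U f)"

definition Ns :: "'f set \<Rightarrow> ('v \<times> 'v) set \<Rightarrow> ('f \<Rightarrow> 'v) \<Rightarrow> 'v \<Rightarrow> 'f set" where
  "Ns F E s v = {f \<in> F. s f \<in> nbh E v}"

definition feasible_dist ::
  "'f set \<Rightarrow> ('v \<times> 'v) set \<Rightarrow> ('f \<Rightarrow> 'v) \<Rightarrow> 'v \<Rightarrow> ('f \<Rightarrow> real) \<Rightarrow> bool" where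
  "feasible_dist F E s v d \<longleftrightarrow>
     (\<forall>f. 0 \<le> d f \<and> d f \<le> 1) \<and>
     (\<forall>f. f \<notin> Ns F E s v \<longrightarrow> d f = 0) \<and>
     (Ns F E s v \<noteq> {} \<longrightarrow> (\<Sum>f\<in>Ns F E s v. d f) = 1)"

definition client_profile ::
  "'v set \<Rightarrow> 'f set \<Rightarrow> ('v \<times> 'v) set \<Rightarrow> ('f \<Rightarrow> 'v) \<Rightarrow> ('v \<Rightarrow> 'f \<Rightarrow> real) \<Rightarrow> bool" where
  "client_profile V F E s p \<longleftrightarrow> (\<forall>v\<in>V. feasible_dist F E s v (p v))"

definition load :: "'v set \<Rightarrow> ('v \<Rightarrow> real) \<Rightarrow> ('v \<Rightarrow> 'f \<Rightarrow> real) \<Rightarrow> 'f \<Rightarrow> real" where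
  "load V w p f = (\<Sum>v\<in>V. p v f * w v)"

definition load_minus :: "'v set \<Rightarrow> ('v \<Rightarrow> real) \<Rightarrow> ('v \<Rightarrow> 'f \<Rightarrow> real) \<Rightarrow> 'v \<Rightarrow> 'f \<Rightarrow> real" where
  "load_minus V w p v f = (\<Sum>u\<in>V - {v}. p u f * w u)"

definition client_cost ::
  "'v set \<Rightarrow> 'f set \<Rightarrow> ('v \<times> 'v) set \<Rightarrow> ('v \<Rightarrow> real) \<Rightarrow> ('f \<Rightarrow> 'v) \<Rightarrow> ('v \<Rightarrow> 'f \<Rightarrow> real) \<Rightarrow> 'v \<Rightarrow> real" where
  "client_cost V F E w s p v = w v + (\<Sum>f\<in>Ns F E s v. p v f * load_minus V w p v f)"

definition client_eq ::
  "'v set \<Rightarrow> 'f set \<Rightarrow> ('v \<times> 'v) set \<Rightarrow> ('v \<Rightarrow> real) \<Rightarrow> ('f \<Rightarrow> 'v) \<Rightarrow> ('v \<Rightarrow> 'f \<Rightarrow> real) \<Rightarrow> bool" where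
  "client_eq V F E w s p \<longleftrightarrow> client_profile V F E s p \<and>
     (\<forall>v\<in>V. \<forall>d. feasible_dist F E s v d \<longrightarrow>
        client_cost V F E w s p v \<le> client_cost V F E w s (p(v := d)) v)"

definition full_client_eq ::
  "'v set \<Rightarrow> ('v \<times> 'v) set \<Rightarrow> ('v \<Rightarrow> real) \<Rightarrow> 'f set \<Rightarrow> ('f \<Rightarrow> 'v set) \<Rightarrow>
   (('f \<Rightarrow> 'v) \<Rightarrow> 'v \<Rightarrow> 'f \<Rightarrow> real) \<Rightarrow> bool" where
  "full_client_eq V E w F U \<sigma> \<longleftrightarrow> (\<forall>s'\<in>fpps F U. client_eq V F E w s' (\<sigma> s'))"

definition is_SPE ::
  "'v set \<Rightarrow> ('v \<times> 'v) set \<Rightarrow> ('v \<Rightarrow> real) \<Rightarrow> 'f set \<Rightarrow> ('f \<Rightarrow> 'v set) \<Rightarrow>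
   ('f \<Rightarrow> 'v) \<Rightarrow> (('f \<Rightarrow> 'v) \<Rightarrow> 'v \<Rightarrow> 'f \<Rightarrow> real) \<Rightarrow> bool" where
  "is_SPE V E w F U s \<sigma> \<longleftrightarrow> s \<in> fpps F U \<and> full_client_eq V E w F U \<sigma> \<and>
     \<not> (\<exists>f\<in>F. \<exists>x\<in>U f. load V w (\<sigma> (s(f := x))) f > load V w (\<sigma> s) f)"

definition participation ::
  "'v set \<Rightarrow> ('v \<times> 'v) set \<Rightarrow> ('v \<Rightarrow> real) \<Rightarrow> 'f set \<Rightarrow> ('f \<Rightarrow> 'v) \<Rightarrow> real" where
  "participation V E w F s = (\<Sum>v\<in>{v\<in>V. Ns F E s v \<noteq> {}}. w v)"

end

theory Submission
  imports Defs
begin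


lemma sum_union_bound:
  fixes w :: "'a \<Rightarrow> real"
  assumes "finite I" "\<And>i. i \<in> I \<Longrightarrow> finite (B i)" "\<And>x. w x \<ge> 0"
  shows "sum w (\<Union>i\<in>I. B i) \<le> (\<Sum>i\<in>I. sum w (B i))"
  using assms
proof (induction I rule: finite_induct)
  case empty then show ?case by simp
next
  case (insert x I)
  have fin: "finite (\<Union>i\<in>I. B i)" using insert by auto
  have "sum w (\<Union>i\<in>insert x I. B i) = sum w (B x \<union> (\<Union>i\<in>I. B i))" by simp
  also have "\<dots> \<le> sum w (B x) + sum w (\<Union>i\<in>I. B i)"
  proof -
    have "sum w (B x \<union> (\<Union>i\<in>I. B i)) = sum w (B x) + sum w (\<Union>i\<in>I. B i) - sum w (B x \<inter> (\<Union>i\<in>I. B i))"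
      using sum_Un[OF _ fin, of "B x" w] insert by auto
    moreover have "sum w (B x \<inter> (\<Union>i\<in>I. B i)) \<ge> 0" by (rule sum_nonneg) (use insert in auto)
    ultimately show ?thesis by linarith
  qed
  also have "\<dots> \<le> sum w (B x) + (\<Sum>i\<in>I. sum w (B i))" using insert by auto
  finally show ?case using insert by simp
qed

lemma sum_loads:
  assumes "finite V" "finite F" "client_profile V F E s p"
  shows "(\<Sum>f\<in>F. load V w p f) = participation V E w F s"
proof -
  have row: "(\<Sum>f\<in>F. p v f) = (if Ns F E s v \<noteq> {} then 1 else 0)" if "v \<in> V" for v
  proof -
    have fd: "feasible_dist F E s v (p v)" using assms(3) that unfolding client_profile_def by auto
    have sub: "Ns F E s v \<subseteq> F" unfolding Ns_def by auto
    have "(\<Sum>f\<in>F. p v f) = (\<Sum>f\<in>Ns F E s v. p v f)"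
      using sum.mono_neutral_right[OF assms(2) sub, of "p v"] fd unfolding feasible_dist_def by auto
    then show ?thesis using fd unfolding feasible_dist_def by auto
  qed
  have "(\<Sum>f\<in>F. load V w p f) = (\<Sum>v\<in>V. w v * (\<Sum>f\<in>F. p v f))"
    unfolding load_def by (subst sum.swap) (simp add: sum_distrib_left mult.commute)
  also have "\<dots> = (\<Sum>v\<in>V. if Ns F E s v \<noteq> {} then w v else 0)"
    by (rule sum.cong) (auto simp: row)
  also have "\<dots> = participation V E w F s"
    unfolding participation_def using assms(1) by (simp add: sum.inter_filter)
  finally show ?thesis .
qed

lemma dev_load:
  assumes "finite V" "f \<in> F" "\<And>v. v \<in> V \<Longrightarrow> w v > 0" "client_profile V F E (s(f := x)) p"
  shows "(\<Sum>v\<in>{v\<in>V. x \<in> nbh E v \<and> Ns F E s v = {}}. w v) \<le> load V w p f"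
proof -
  let ?D = "{v\<in>V. x \<in> nbh E v \<and> Ns F E s v = {}}"
  have one: "p v f = 1" if "v \<in> ?D" for v
  proof -
    have "Ns F E (s(f := x)) v = {f}"
      using that assms(2) unfolding Ns_def by auto
    moreover have "feasible_dist F E (s(f := x)) v (p v)" using assms(4) that unfolding client_profile_def by auto
    ultimately show ?thesis unfolding feasible_dist_def by auto
  qed
  have nn: "0 \<le> p v f * w v" if "v \<in> V" for v
    using assms(3,4) that unfolding client_profile_def feasible_dist_def
    by (metis less_eq_real_def mult_nonneg_nonneg)
  have "(\<Sum>v\<in>?D. w v) = (\<Sum>v\<in>?D. p v f * w v)" by (rule sum.cong) (auto simp: one)
  also have "\<dots> \<le> (\<Sum>v\<in>V. p v f * w v)"
    by (rule sum_mono2) (use assms(1) nn in auto)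
  finally show ?thesis unfolding load_def .
qed

lemma part1:
  assumes "valid_instance V E w F U k" "is_SPE V E w F U s \<sigma>" "s' \<in> fpps F U"
  shows "participation V E w F s' \<le> 2 * participation V E w F s"
proof -
  have fV: "finite V" and fF: "finite F" and wpos: "\<And>v. v \<in> V \<Longrightarrow> w v > 0"
    using assms(1) unfolding valid_instance_def by auto
  have sF: "s \<in> fpps F U" and fce: "full_client_eq V E w F U \<sigma>"
    and nodev: "\<And>f x. f \<in> F \<Longrightarrow> x \<in> U f \<Longrightarrow> load V w (\<sigma> (s(f := x))) f \<le> load V w (\<sigma> s) f"
    using assms(2) unfolding is_SPE_def by (auto simp: not_less)
  define D where "D f = {v\<in>V. s' f \<in> nbh E v \<and> Ns F E s v = {}}" for f
  define C where "C t = {v\<in>V. Ns F E t v \<noteq> {}}" for t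
  have cp: "client_profile V F E t (\<sigma> t)" if "t \<in> fpps F U" for t
    using fce that unfolding full_client_eq_def client_eq_def by auto
  have upd: "s(f := s' f) \<in> fpps F U" if "f \<in> F" for f
    using sF assms(3) that unfolding fpps_def by (auto simp: PiE_def Pi_def extensional_def)
  have Dle: "sum w (D f) \<le> load V w (\<sigma> s) f" if "f \<in> F" for f
  proof -
    have "sum w (D f) \<le> load V w (\<sigma> (s(f := s' f))) f"
      unfolding D_def by (rule dev_load[OF fV that wpos cp[OF upd[OF that]]])
    also have "\<dots> \<le> load V w (\<sigma> s) f"
      using nodev that assms(3) unfolding fpps_def by auto
    finally show ?thesis .
  qed
  have sub: "C s' \<subseteq> C s \<union> (\<Union>f\<in>F. D f)"
    unfolding C_def D_def Ns_def by auto
  have w0: "\<And>x. (\<lambda>v. if v \<in> V then w v else 0) x \<ge> 0" using wpos by (simp add: less_eq_real_def)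
  let ?w = "\<lambda>v. if v \<in> V then w v else 0"
  have CsV: "C t \<subseteq> V" for t unfolding C_def by auto
  have DV: "D f \<subseteq> V" for f unfolding D_def by auto
  have eqw: "sum w A = sum ?w A" if "A \<subseteq> V" for A by (rule sum.cong) (use that in auto)
  have "participation V E w F s' = sum ?w (C s')" unfolding participation_def C_def
    by (rule eqw) auto
  also have "\<dots> \<le> sum ?w (C s \<union> (\<Union>f\<in>F. D f))"
    by (rule sum_mono2) (use sub fV fF CsV DV w0 finite_subset[OF DV fV] finite_subset[OF CsV fV] in auto)
  also have "\<dots> \<le> sum ?w (C s) + sum ?w (\<Union>f\<in>F. D f)"
  proof -
    have f1: "finite (C s)" "finite (\<Union>f\<in>F. D f)" using fV fF finite_subset[OF DV fV] finite_subset[OF CsV fV] by auto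
    have "sum ?w (C s \<inter> (\<Union>f\<in>F. D f)) \<ge> 0" by (rule sum_nonneg) (use w0 in auto)
    then show ?thesis using sum_Un[OF f1, of ?w] by linarith
  qed
  also have "sum ?w (\<Union>f\<in>F. D f) \<le> (\<Sum>f\<in>F. sum ?w (D f))"
    by (rule sum_union_bound) (use fF fV DV w0 finite_subset[OF DV fV] in auto)
  also have "(\<Sum>f\<in>F. sum ?w (D f)) = (\<Sum>f\<in>F. sum w (D f))" using eqw DV by simp
  also have "\<dots> \<le> (\<Sum>f\<in>F. load V w (\<sigma> s) f)" by (rule sum_mono) (rule Dle)
  also have "\<dots> = participation V E w F s" by (rule sum_loads[OF fV fF cp[OF sF]])
  also have "sum ?w (C s) = participation V E w F s" unfolding participation_def C_def
    by (rule eqw[symmetric]) auto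
  finally show ?thesis by linarith
qed



definition iV :: "nat \<Rightarrow> nat set" where "iV k = {0..k}"
definition iE :: "nat \<Rightarrow> (nat \<times> nat) set" where "iE k = {(0, Suc f) | f. f < k}"
definition iw :: "nat \<Rightarrow> nat \<Rightarrow> real" where "iw k v = (if v = 0 then real k else 1)"
definition iF :: "nat \<Rightarrow> nat set" where "iF k = {..<k}"
definition iU :: "nat \<Rightarrow> nat set" where "iU f = {0, Suc f}"
definition iA :: "nat \<Rightarrow> (nat \<Rightarrow> nat) \<Rightarrow> nat set" where "iA k t = {g \<in> {..<k}. t g = 0}"
definition isig :: "nat \<Rightarrow> (nat \<Rightarrow> nat) \<Rightarrow> nat \<Rightarrow> nat \<Rightarrow> real" where
  "isig k t v f = (if v = 0 then (if f < k then (if iA k t \<noteq> {} then (if t f = 0 then 1 / real (card (iA k t)) else 0) else 1 / real k) else 0)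
                   else (if f < k \<and> v = Suc f \<and> t f = Suc f then 1 else 0))"

lemma nbh0: "nbh (iE k) 0 = {0..k}"
proof
  show "nbh (iE k) 0 \<subseteq> {0..k}" by (auto simp: nbh_def iE_def)
  show "{0..k} \<subseteq> nbh (iE k) 0"
  proof
    fix u assume u: "u \<in> {0..k}"
    show "u \<in> nbh (iE k) 0"
    proof (cases u)
      case 0 then show ?thesis by (simp add: nbh_def)
    next
      case (Suc j) then have "(0, u) \<in> iE k" using u unfolding iE_def by auto
      then show ?thesis by (simp add: nbh_def)
    qed
  qed
qed

lemma nbhS: "nbh (iE k) (Suc j) = {Suc j}"
  unfolding nbh_def iE_def by auto

lemma tvals: "t \<in> fpps (iF k) iU \<Longrightarrow> f < k \<Longrightarrow> t f = 0 \<or> t f = Suc f"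
  unfolding fpps_def iF_def iU_def by (auto simp: PiE_def Pi_def)

lemma tvalsS: "t \<in> fpps (iF k) iU \<Longrightarrow> f < k \<Longrightarrow> t f = Suc j \<Longrightarrow> f = j"
  using tvals[of t k f] by auto

lemma Ns0: "t \<in> fpps (iF k) iU \<Longrightarrow> Ns (iF k) (iE k) t 0 = iF k"
  unfolding Ns_def nbh0 using tvals[of t k] by (auto simp: iF_def) (metis Suc_leI atLeastAtMost_iff le0)

lemma NsS: "t \<in> fpps (iF k) iU \<Longrightarrow> Ns (iF k) (iE k) t (Suc j) = (if j < k \<and> t j = Suc j then {j} else {})"
  unfolding Ns_def nbhS using tvalsS[of t k] by (auto simp: iF_def)

lemma lm_upd: "load_minus V w (p(v := d)) v f = load_minus V w p v f"
  unfolding load_minus_def by (rule sum.cong) auto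

lemma lm0: assumes "f < k"
  shows "load_minus (iV k) (iw k) (isig k t) 0 f = (if t f = Suc f then 1 else 0)"
proof -
  have "load_minus (iV k) (iw k) (isig k t) 0 f = (\<Sum>u\<in>{0..k} - {0}. if u = Suc f then (if t f = Suc f then 1 else 0) else 0)"
    unfolding load_minus_def iV_def by (rule sum.cong) (auto simp: isig_def iw_def assms)
  also have "\<dots> = (if t f = Suc f then 1 else 0)" using assms by (subst sum.delta) auto
  finally show ?thesis .
qed

lemma cardA: "finite (iA k t)" unfolding iA_def by auto

lemma memA: "f < k \<Longrightarrow> f \<in> iA k t \<longleftrightarrow> t f = 0" by (simp add: iA_def)

lemma feas0: assumes "t \<in> fpps (iF k) iU" "k \<ge> 1"
  shows "feasible_dist (iF k) (iE k) t 0 (isig k t 0)"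
proof -
  have "(\<Sum>f\<in>iF k. isig k t 0 f) = 1"
  proof (cases "iA k t = {}")
    case True
    then show ?thesis using assms(2) by (simp add: isig_def iF_def)
  next
    case False
    have "(\<Sum>f\<in>iF k. isig k t 0 f) = (\<Sum>f\<in>iF k. if f \<in> iA k t then 1 / real (card (iA k t)) else 0)"
      by (rule sum.cong) (auto simp: isig_def iF_def False memA)
    also have "\<dots> = (\<Sum>f\<in>iA k t. 1 / real (card (iA k t)))"
      by (subst sum.inter_filter[symmetric]) (use False in \<open>auto simp: iF_def iA_def intro: sum.cong\<close>)
    also have "\<dots> = 1" using False cardA[of k t] by simp
    finally show ?thesis .
  qed
  moreover have "0 \<le> isig k t 0 f \<and> isig k t 0 f \<le> 1" for f
  proof -
    have "iA k t \<noteq> {} \<Longrightarrow> card (iA k t) \<ge> 1" using cardA[of k t] by (simp add: Suc_leI card_gt_0_iff)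
    then have "iA k t \<noteq> {} \<Longrightarrow> 1 / real (card (iA k t)) \<le> 1" by simp
    moreover have "1 / real k \<le> 1" using assms(2) by simp
    ultimately show ?thesis unfolding isig_def by auto
  qed
  ultimately show ?thesis unfolding feasible_dist_def Ns0[OF assms(1)]
    by (auto simp: isig_def iF_def)
qed

lemma dS: assumes "t \<in> fpps (iF k) iU" "feasible_dist (iF k) (iE k) t (Suc j) d"
  shows "d = isig k t (Suc j)"
proof
  fix f
  show "d f = isig k t (Suc j) f"
  proof (cases "j < k \<and> t j = Suc j")
    case True
    then have "Ns (iF k) (iE k) t (Suc j) = {j}" using NsS[OF assms(1)] by simp
    then show ?thesis using assms(2) True unfolding feasible_dist_def isig_def by auto
  next
    case False
    then have "Ns (iF k) (iE k) t (Suc j) = {}" using NsS[OF assms(1)] by simp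
    then show ?thesis using assms(2) False unfolding feasible_dist_def isig_def by auto
  qed
qed

lemma feasS: assumes "t \<in> fpps (iF k) iU"
  shows "feasible_dist (iF k) (iE k) t (Suc j) (isig k t (Suc j))"
  unfolding feasible_dist_def NsS[OF assms] by (auto simp: isig_def)

lemma cprof: assumes "t \<in> fpps (iF k) iU" "k \<ge> 1"
  shows "client_profile (iV k) (iF k) (iE k) t (isig k t)"
  unfolding client_profile_def
proof
  fix v assume "v \<in> iV k"
  show "feasible_dist (iF k) (iE k) t v (isig k t v)"
    by (cases v) (use feas0[OF assms] feasS[OF assms(1)] in auto)
qed

lemma ceq: assumes "t \<in> fpps (iF k) iU" "k \<ge> 1"
  shows "client_eq (iV k) (iF k) (iE k) (iw k) t (isig k t)"
  unfolding client_eq_def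
proof (intro conjI ballI allI impI)
  show "client_profile (iV k) (iF k) (iE k) t (isig k t)" by (rule cprof[OF assms])
next
  fix v d assume v: "v \<in> iV k" and d: "feasible_dist (iF k) (iE k) t v d"
  show "client_cost (iV k) (iF k) (iE k) (iw k) t (isig k t) v
        \<le> client_cost (iV k) (iF k) (iE k) (iw k) t ((isig k t)(v := d)) v"
  proof (cases v)
    case (Suc j)
    then have "(isig k t)(v := d) = isig k t" using dS[OF assms(1)] d by auto
    then show ?thesis by simp
  next
    case 0
    let ?c = "\<lambda>p. client_cost (iV k) (iF k) (iE k) (iw k) t p 0"
    have cst: "?c ((isig k t)(0 := e)) = real k + (\<Sum>f\<in>iF k. e f * (if t f = Suc f then 1 else 0))" for e
      unfolding client_cost_def Ns0[OF assms(1)] lm_upd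
      by (auto simp: iw_def iF_def lm0 intro!: sum.cong)
    have dnn: "\<And>f. 0 \<le> d f" using d unfolding feasible_dist_def by auto
    show ?thesis
    proof (cases "iA k t = {}")
      case False
      have "?c (isig k t) = ?c ((isig k t)(0 := isig k t 0))" by simp
      also have "\<dots> = real k" unfolding cst
        by (auto simp: isig_def iF_def False intro!: sum.neutral)
      also have "\<dots> \<le> ?c ((isig k t)(0 := d))" unfolding cst
        by (auto intro!: sum_nonneg simp: dnn)
      finally show ?thesis using 0 by simp
    next
      case True
      have all: "t f = Suc f" if "f \<in> iF k" for f
      proof -
        have "t f \<noteq> 0" using True that unfolding iA_def iF_def by auto
        moreover have "f < k" using that unfolding iF_def by auto
        ultimately show ?thesis using tvals[OF assms(1), of f] by auto
      qed
      have "?c ((isig k t)(0 := e)) = real k + 1" if "feasible_dist (iF k) (iE k) t 0 e" for e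
      proof -
        have "(\<Sum>f\<in>iF k. e f * (if t f = Suc f then 1 else 0)) = (\<Sum>f\<in>iF k. e f)"
          by (rule sum.cong) (auto simp: all)
        also have "\<dots> = 1"
        proof -
          have "0 \<in> iF k" using assms(2) unfolding iF_def by simp
          then have "iF k \<noteq> {}" by blast
          then show ?thesis using that unfolding feasible_dist_def Ns0[OF assms(1)] by auto
        qed
        finally show ?thesis unfolding cst by simp
      qed
      note ce = this
      have "?c (isig k t) = ?c ((isig k t)(0 := isig k t 0))" by simp
      also have "\<dots> = real k + 1" by (rule ce[OF feas0[OF assms]])
      also have "\<dots> = ?c ((isig k t)(0 := d))" using ce d 0 by simp
      finally show ?thesis using 0 by simp
    qed
  qed
qed


lemma loadf: assumes "t \<in> fpps (iF k) iU" "f < k"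
  shows "load (iV k) (iw k) (isig k t) f = isig k t 0 f * real k + (if t f = Suc f then 1 else 0)"
proof -
  have V: "iV k = insert 0 {1..k}" unfolding iV_def by auto
  have "(\<Sum>v\<in>{1..k}. isig k t v f * iw k v) = (\<Sum>v\<in>{1..k}. if v = Suc f then (if t f = Suc f then 1 else 0) else 0)"
    by (rule sum.cong) (auto simp: isig_def iw_def assms(2))
  also have "\<dots> = (if t f = Suc f then 1 else 0)" using assms(2) by (subst sum.delta) auto
  finally show ?thesis unfolding load_def V by (simp add: iw_def)
qed

definition s0 :: "nat \<Rightarrow> nat \<Rightarrow> nat" where "s0 k = (\<lambda>f. if f < k then 0 else undefined)"
definition ss :: "nat \<Rightarrow> nat \<Rightarrow> nat" where "ss k = (\<lambda>f. if f < k then Suc f else undefined)"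

lemma s0_in: "s0 k \<in> fpps (iF k) iU"
  unfolding fpps_def s0_def iF_def iU_def by (auto simp: PiE_def extensional_def)

lemma ss_in: "ss k \<in> fpps (iF k) iU"
  unfolding fpps_def ss_def iF_def iU_def by (auto simp: PiE_def extensional_def)

lemma A_s0: "iA k (s0 k) = {..<k}" unfolding iA_def s0_def by auto

lemma load_s0: assumes "f < k" shows "load (iV k) (iw k) (isig k (s0 k)) f = 1"
proof -
  have ne: "{..<k} \<noteq> {}" using assms by auto
  have "isig k (s0 k) 0 f = 1 / real k" using assms ne unfolding isig_def A_s0 by (simp add: s0_def)
  then show ?thesis using assms unfolding loadf[OF s0_in assms] by (simp add: s0_def)
qed

lemma load_dev: assumes "f < k" "k \<ge> 2" "x \<in> iU f"
  shows "load (iV k) (iw k) (isig k ((s0 k)(f := x))) f \<le> 1"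
proof (cases "x = 0")
  case True
  then have "(s0 k)(f := x) = s0 k" using assms(1) unfolding s0_def by auto
  then show ?thesis using load_s0[OF assms(1)] by simp
next
  case False
  then have x: "x = Suc f" using assms(3) unfolding iU_def by auto
  let ?t = "(s0 k)(f := x)"
  have tin: "?t \<in> fpps (iF k) iU" using assms(1,3) unfolding fpps_def iF_def
    by (auto simp: PiE_def extensional_def s0_def iU_def)
  define g where "g = (if f = 0 then 1 else 0::nat)"
  have "g \<in> iA k ?t" using assms(1,2) unfolding g_def iA_def s0_def by auto
  then have "iA k ?t \<noteq> {}" by blast
  then have "isig k ?t 0 f = 0" using x unfolding isig_def by simp
  then show ?thesis unfolding loadf[OF tin assms(1)] by simp
qed

lemma SPE: assumes "k \<ge> 2"
  shows "is_SPE (iV k) (iE k) (iw k) (iF k) iU (s0 k) (isig k)"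
  unfolding is_SPE_def full_client_eq_def
proof (intro conjI ballI)
  show "s0 k \<in> fpps (iF k) iU" by (rule s0_in)
next
  fix t assume "t \<in> fpps (iF k) iU"
  then show "client_eq (iV k) (iF k) (iE k) (iw k) t (isig k t)" using ceq assms by simp
next
  show "\<not> (\<exists>f\<in>iF k. \<exists>x\<in>iU f. load (iV k) (iw k) (isig k ((s0 k)(f := x))) f > load (iV k) (iw k) (isig k (s0 k)) f)"
    using load_dev[OF _ assms] load_s0 unfolding iF_def by (auto simp: not_less)
qed

lemma part_s0: assumes "k \<ge> 1" shows "participation (iV k) (iE k) (iw k) (iF k) (s0 k) = real k"
proof -
  have ne: "iF k \<noteq> {}" using assms unfolding iF_def by (metis lessThan_iff empty_iff less_le_trans zero_less_one)
  have "{v \<in> iV k. Ns (iF k) (iE k) (s0 k) v \<noteq> {}} = {0}"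
  proof (intro equalityI subsetI)
    fix v assume v: "v \<in> {v \<in> iV k. Ns (iF k) (iE k) (s0 k) v \<noteq> {}}"
    show "v \<in> {0}"
    proof (cases v)
      case (Suc j) then show ?thesis using v NsS[OF s0_in, of k j] by (simp add: s0_def split: if_splits)
    qed simp
  next
    fix v assume "v \<in> {0::nat}"
    then show "v \<in> {v \<in> iV k. Ns (iF k) (iE k) (s0 k) v \<noteq> {}}"
      using Ns0[OF s0_in, of k] ne by (simp add: iV_def)
  qed
  then show ?thesis unfolding participation_def by (simp add: iw_def)
qed

lemma part_ss: assumes "k \<ge> 1" shows "participation (iV k) (iE k) (iw k) (iF k) (ss k) = 2 * real k"
proof -
  have ne: "iF k \<noteq> {}" using assms unfolding iF_def by (metis lessThan_iff empty_iff less_le_trans zero_less_one)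
  have "{v \<in> iV k. Ns (iF k) (iE k) (ss k) v \<noteq> {}} = iV k"
  proof (intro equalityI subsetI)
    fix v assume v: "v \<in> iV k"
    have "Ns (iF k) (iE k) (ss k) v \<noteq> {}"
    proof (cases v)
      case 0 then show ?thesis using Ns0[OF ss_in, of k] ne by simp
    next
      case (Suc j) then show ?thesis using v NsS[OF ss_in, of k j] by (simp add: ss_def iV_def)
    qed
    then show "v \<in> {v \<in> iV k. Ns (iF k) (iE k) (ss k) v \<noteq> {}}" using v by simp
  qed simp
  moreover have "sum (iw k) (iV k) = 2 * real k"
  proof -
    have V: "iV k = insert 0 {1..k}" unfolding iV_def by auto
    have "sum (iw k) {1..k} = real k" by (simp add: iw_def)
    then show ?thesis unfolding V by (simp add: iw_def)
  qed
  ultimately show ?thesis unfolding participation_def by simp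
qed

lemma valid: assumes "k \<ge> 1" shows "valid_instance (iV k) (iE k) (iw k) (iF k) iU k"
  using assms unfolding valid_instance_def iV_def iE_def iw_def iF_def iU_def
  by (auto simp: Rats_of_nat)

lemma part2: assumes "k \<ge> 2"
  shows "\<exists>(V :: nat set) E w (F :: nat set) U s \<sigma> s'.
            valid_instance V E w F U k \<and> is_SPE V E w F U s \<sigma> \<and> s' \<in> fpps F U \<and>
              participation V E w F s' = 2 * participation V E w F s \<and>
              participation V E w F s > 0"
proof -
  have k1: "k \<ge> 1" using assms by simp
  have k0: "0 < k" using assms by simp
  show ?thesis
    apply (rule exI[of _ "iV k"], rule exI[of _ "iE k"], rule exI[of _ "iw k"], rule exI[of _ "iF k"],
           rule exI[of _ iU], rule exI[of _ "s0 k"], rule exI[of _ "isig k"], rule exI[of _ "ss k"])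
    using valid[OF k1] SPE[OF assms] ss_in part_s0[OF k1] part_ss[OF k1] k0 by (simp add: of_nat_0_less_iff)
qed


theorem mainTheorem5:
  fixes k :: nat
  assumes "k \<ge> 2"
  shows "(\<forall>(V :: 'v set) E w (F :: 'f set) U s \<sigma> s'.
            valid_instance V E w F U k \<and> is_SPE V E w F U s \<sigma> \<and> s' \<in> fpps F U \<longrightarrow>
              participation V E w F s' \<le> 2 * participation V E w F s)
       \<and> (\<exists>(V :: nat set) E w (F :: nat set) U s \<sigma> s'.
            valid_instance V E w F U k \<and> is_SPE V E w F U s \<sigma> \<and> s' \<in> fpps F U \<and>
              participation V E w F s' = 2 * participation V E w F s \<and>
              participation V E w F s > 0)"
  using part1 part2[OF assms] by blast

end
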